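(* Let $q<2$ with $q\neq 1$, let $r\in\mathbb{R}$, and let $a_1,\dots,a_n>0$, $b_1,\dots,b_n>0$. Then $$\left(\sum_{i=1}^n b_i^r\right)^{1-q}\sum_{i=1}^n a_i^r \ln_q\!\left(\frac{a_i^r}{b_i^r}\right)\ \geq\ \left(\sum_{i=1}^n a_i^r\right)\left\{\ln_q\!\left(\sum_{i=1}^n a_i^r\right)-\ln_q\!\left(\sum_{i=1}^n b_i^r\right)\right\}.$$
   Context: For $q\neq 1$ and $x>0$, the $q$-deformed logarithm is $\ln_q(x)=\dfrac{x^{1-q}-1}{1-q}$. *)

theory Defs
  imports Complex_Main
begin

definition ln_q :: "real \<Rightarrow> real \<Rightarrow> real" where
  "ln_q q x = (x powr (1 - q) - 1) / (1 - q)"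

end

theory Submission
  imports Defs "HOL-Analysis.Analysis"
begin

lemma powr_concave:
  assumes "0 < p" "p \<le> 1" shows "concave_on {0<..} (\<lambda>x::real. x powr p)"
proof (rule f''_le0_imp_concave[where f'="\<lambda>x. p * x powr (p - 1)" and f''="\<lambda>x. p * ((p - 1) * x powr (p - 1 - 1))"])
  fix x :: real assume x: "x \<in> {0<..}"
  then show "DERIV (\<lambda>x. x powr p) x :> p * x powr (p - 1)"
    by (auto intro!: derivative_eq_intros)
  show "DERIV (\<lambda>x. p * x powr (p - 1)) x :> p * ((p - 1) * x powr (p - 1 - 1))"
    using x by (auto intro!: derivative_eq_intros)
  show "p * ((p - 1) * x powr (p - 1 - 1)) \<le> 0"
    using assms by (intro mult_nonneg_nonpos mult_nonpos_nonneg) auto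
qed auto

lemma key_jensen:
  fixes x y :: "nat \<Rightarrow> real" and s :: real
  assumes fin: "finite S" and ne: "S \<noteq> {}"
    and xp: "\<And>i. i \<in> S \<Longrightarrow> x i > 0" and yp: "\<And>i. i \<in> S \<Longrightarrow> y i > 0"
  shows "s \<ge> 1 \<Longrightarrow> (\<Sum>i\<in>S. x i) powr s \<le> (\<Sum>i\<in>S. y i) powr (s-1) * (\<Sum>i\<in>S. y i * (x i / y i) powr s)"
    and "0 < s \<Longrightarrow> s \<le> 1 \<Longrightarrow> (\<Sum>i\<in>S. x i) powr s \<ge> (\<Sum>i\<in>S. y i) powr (s-1) * (\<Sum>i\<in>S. y i * (x i / y i) powr s)"
proof -
  define A where "A = (\<Sum>i\<in>S. x i)"
  define B where "B = (\<Sum>i\<in>S. y i)"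
  have Bp: "B > 0" unfolding B_def using fin ne yp by (simp add: sum_pos)
  have Ap: "A > 0" unfolding A_def using fin ne xp by (simp add: sum_pos)
  have w1: "(\<Sum>i\<in>S. y i / B) = 1" using Bp by (simp add: B_def sum_divide_distrib[symmetric])
  have wu: "(\<Sum>i\<in>S. (y i / B) *\<^sub>R (x i / y i)) = A / B"
    unfolding A_def sum_divide_distrib
  proof (rule sum.cong[OF refl])
    fix i assume "i \<in> S"
    then have "y i > 0" using yp by auto
    then show "(y i / B) *\<^sub>R (x i / y i) = x i / B" by simp
  qed
  have wpos: "0 \<le> y i / B" if "i \<in> S" for i
  proof -
    have "y i > 0" using yp that by auto
    then show ?thesis using Bp by simp
  qed
  have upos: "x i / y i \<in> {0<..}" if "i \<in> S" for i
  proof -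
    have "y i > 0" "x i > 0" using xp yp that by auto
    then show ?thesis by simp
  qed
  have T: "(\<Sum>i\<in>S. (y i / B) * (x i / y i) powr s) = (\<Sum>i\<in>S. y i * (x i / y i) powr s) / B"
    by (simp add: sum_divide_distrib)
  have AB: "(A / B) powr s = A powr s / B powr s" using Ap Bp by (simp add: powr_divide)
  have Bs: "B powr s = B * B powr (s - 1)" using Bp
  proof -
    have "B powr s = B powr (1 + (s - 1))" by simp
    also have "\<dots> = B powr 1 * B powr (s - 1)" by (rule powr_add)
    finally show ?thesis using Bp by simp
  qed
  {
    assume s: "s \<ge> 1"
    have "(A/B) powr s \<le> (\<Sum>i\<in>S. (y i / B) * (x i / y i) powr s)"
      using convex_on_sum[where a="\<lambda>i. y i / B" and y="\<lambda>i. x i / y i", OF fin ne powr_convex[OF s] w1 wpos upos] unfolding wu by simp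
    then have "A powr s / B powr s \<le> (\<Sum>i\<in>S. y i * (x i / y i) powr s) / B" using AB T by simp
    then have "A powr s \<le> (\<Sum>i\<in>S. y i * (x i / y i) powr s) / B * B powr s"
      using Bp by (simp add: divide_le_eq)
    also have "\<dots> = B powr (s-1) * (\<Sum>i\<in>S. y i * (x i / y i) powr s)" using Bs Bp by simp
    finally show "(\<Sum>i\<in>S. x i) powr s \<le> (\<Sum>i\<in>S. y i) powr (s-1) * (\<Sum>i\<in>S. y i * (x i / y i) powr s)"
      unfolding A_def B_def .
  }
  {
    assume s: "0 < s" "s \<le> 1"
    have "(A/B) powr s \<ge> (\<Sum>i\<in>S. (y i / B) * (x i / y i) powr s)"
      using concave_on_sum[where a="\<lambda>i. y i / B" and y="\<lambda>i. x i / y i", OF fin ne powr_concave[OF s] w1 wpos upos] unfolding wu by simp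
    then have "A powr s / B powr s \<ge> (\<Sum>i\<in>S. y i * (x i / y i) powr s) / B" using AB T by simp
    then have "A powr s \<ge> (\<Sum>i\<in>S. y i * (x i / y i) powr s) / B * B powr s"
      using Bp by (simp add: le_divide_eq)
    also have "(\<Sum>i\<in>S. y i * (x i / y i) powr s) / B * B powr s = B powr (s-1) * (\<Sum>i\<in>S. y i * (x i / y i) powr s)" using Bs Bp by simp
    finally show "(\<Sum>i\<in>S. x i) powr s \<ge> (\<Sum>i\<in>S. y i) powr (s-1) * (\<Sum>i\<in>S. y i * (x i / y i) powr s)"
      unfolding A_def B_def .
  }
qed



lemma aux1: "(p::real) \<noteq> 0 \<Longrightarrow> Bp*((T-A)/p) - (As - A*Bp)/p = (Bp*T - As)/p"
  by (simp add: diff_divide_distrib right_diff_distrib)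
lemma aux2: "(p::real) \<noteq> 0 \<Longrightarrow> A*((X-1)/p - (Y-1)/p) = (A*X - A*Y)/p"
  by (simp add: diff_divide_distrib right_diff_distrib)
lemma aux3: "(p::real) \<noteq> 0 \<Longrightarrow> x*((u-1)/p) = (x*u - x)/p"
  by (simp add: diff_divide_distrib right_diff_distrib)

theorem mainTheorem3:
  fixes q r :: real and n :: nat and a b :: "nat \<Rightarrow> real"
  assumes "q < 2" and "q \<noteq> 1"
    and "\<And>i. i \<in> {1..n} \<Longrightarrow> a i > 0"
    and "\<And>i. i \<in> {1..n} \<Longrightarrow> b i > 0"
  shows "(\<Sum>i=1..n. b i powr r) powr (1 - q) *
           (\<Sum>i=1..n. a i powr r * ln_q q (a i powr r / b i powr r))
         \<ge> (\<Sum>i=1..n. a i powr r) *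
           (ln_q q (\<Sum>i=1..n. a i powr r) - ln_q q (\<Sum>i=1..n. b i powr r))"
proof (cases "n = 0")
  case True then show ?thesis by simp
next
  case False
  define S where "S = {1..n}"
  define x where "x i = a i powr r" for i
  define y where "y i = b i powr r" for i
  define p where "p = 1 - q"
  define s where "s = 2 - q"
  have fin: "finite S" and ne: "S \<noteq> {}" using False by (auto simp: S_def)
  have xp: "\<And>i. i \<in> S \<Longrightarrow> x i > 0" using assms(3) by (force simp: x_def S_def)
  have yp: "\<And>i. i \<in> S \<Longrightarrow> y i > 0" using assms(4) by (force simp: y_def S_def)
  have p0: "p \<noteq> 0" using assms(2) by (simp add: p_def)
  have s0: "s > 0" using assms(1) by (simp add: s_def)
  have sp: "s = 1 + p" "s - 1 = p" by (simp_all add: s_def p_def)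
  define A where "A = (\<Sum>i\<in>S. x i)"
  define B where "B = (\<Sum>i\<in>S. y i)"
  define T where "T = (\<Sum>i\<in>S. y i * (x i / y i) powr s)"
  have Bp: "B > 0" unfolding B_def using fin ne yp by (simp add: sum_pos)
  have Ap: "A > 0" unfolding A_def using fin ne xp by (simp add: sum_pos)
  have termeq: "x i * ln_q q (x i / y i) = (y i * (x i / y i) powr s - x i) / p" if "i \<in> S" for i
  proof -
    have xi: "x i > 0" and yi: "y i > 0" using that xp yp by auto
    have "(x i / y i) powr s = (x i / y i) * (x i / y i) powr p"
      using xi yi by (simp add: sp powr_add)
    then have "y i * (x i / y i) powr s = x i * (x i / y i) powr p" using yi by simp
    have "x i * ln_q q (x i / y i) = x i * (((x i / y i) powr p - 1) / p)"
      unfolding ln_q_def p_def by simp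
    also have "\<dots> = (x i * (x i / y i) powr p - x i) / p" by (rule aux3[OF p0])
    finally show ?thesis using \<open>y i * (x i / y i) powr s = x i * (x i / y i) powr p\<close> by simp
  qed
  have L: "(\<Sum>i\<in>S. x i * ln_q q (x i / y i)) = (T - A) / p"
    unfolding T_def A_def using termeq
    by (simp add: sum_divide_distrib[symmetric] sum_subtractf)
  have As: "A powr s = A * A powr p" using Ap by (simp add: sp powr_add)
  have R: "A * (ln_q q A - ln_q q B) = (A powr s - A * B powr p) / p"
  proof -
    have "A * (ln_q q A - ln_q q B) = A * ((A powr p - 1) / p - (B powr p - 1) / p)"
      unfolding ln_q_def p_def by simp
    also have "\<dots> = (A * A powr p - A * B powr p) / p" by (rule aux2[OF p0])
    finally show ?thesis using As by simp
  qed
  have goal: "B powr p * ((T - A) / p) \<ge> (A powr s - A * B powr p) / p"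
  proof (cases "p > 0")
    case True
    then have s1: "s \<ge> 1" using sp by simp
    have "A powr s \<le> B powr p * T"
      using key_jensen(1)[of S x y s, OF fin ne xp yp s1] sp(2) unfolding A_def B_def T_def by simp
    then have "(B powr p * T - A powr s) / p \<ge> 0" using True by simp
    then have "0 \<le> B powr p * ((T - A) / p) - (A powr s - A * B powr p) / p"
      by (simp only: aux1[OF p0, of "B powr p" T A "A powr s"])
    then show ?thesis by (simp only: diff_ge_0_iff_ge)
  next
    case False
    then have "p < 0" using p0 by simp
    then have s1: "s \<le> 1" using sp by simp
    have "A powr s \<ge> B powr p * T"
      using key_jensen(2)[of S x y s, OF fin ne xp yp s0 s1] sp(2) unfolding A_def B_def T_def by simp
    then have "(B powr p * T - A powr s) / p \<ge> 0" using \<open>p < 0\<close>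
      by (simp add: divide_nonpos_neg)
    then have "0 \<le> B powr p * ((T - A) / p) - (A powr s - A * B powr p) / p"
      by (simp only: aux1[OF p0, of "B powr p" T A "A powr s"])
    then show ?thesis by (simp only: diff_ge_0_iff_ge)
  qed
  have e1: "(\<Sum>i=1..n. b i powr r) = B" unfolding B_def S_def y_def ..
  have e2: "(\<Sum>i=1..n. a i powr r) = A" unfolding A_def S_def x_def ..
  have e3: "(\<Sum>i=1..n. a i powr r * ln_q q (a i powr r / b i powr r)) = (\<Sum>i\<in>S. x i * ln_q q (x i / y i))"
    unfolding S_def x_def y_def ..
  have e4: "1 - q = p" unfolding p_def ..
  show ?thesis unfolding e1 e2 e3 e4 L R using goal .
qed
end
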